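(* Under the assumptions of Theorem 2, for every integer $j\ge J_2^\star$, $$\mathbb P(\tau_{\text{com}}>j)\le 3(n+m)^3\exp\big(-j/(3\bar d)\big).$$
   Context: Setting: undirected graph on honest agents $[n]$ and malicious agents $n+1,\dots,n+m$; $N(i)$ neighbors of $i$, $\bar d=\max_{i\in[n]}|N(i)|$; $E_{\text{hon}}$ the edges among honest agents. In the algorithm, at the end of each phase $j$, honest $i$ samples $H_j^{(i)}$ uniformly from $N(i)\setminus P_j^{(i)}$ (independently of everything else given the past), where $P_j^{(i)}$ is its blocklist at phase $j$; the proposed blocking rule, whenever it triggers at phase $j$, adds the agent $H_{j-1}^{(i)}$ to $P_{j'}^{(i)}$ exactly for $j'\in\{j,\dots,\lceil j^\eta\rceil\}$ (blocklists otherwise empty); the rule involves $\theta_j=(j/3)^{\rho_1}$. Assumptions of Theorem 2 include $\eta>1$, $0<\rho_1\le1/\eta$ (and the other conditions $\beta>1$, $\alpha>\frac32+\frac1{2\beta}+\frac1{2\rho_1^2}$, $\frac1{2\alpha-3}<\rho_2<\rho_1(\beta-1)$, $G_{\text{hon}}$ connected). Definitions. $J_2^\star=\min\{j\in\mathbb N: 1\le\lfloor\theta_{j'}\rfloor\le j'-2\text{ and } j'/3\le(j'-2)-\lceil\lfloor\theta_{j'}\rfloor^\eta\rceil\ \forall j'\ge j\}$. For $\{i,i'\}\in E_{\text{hon}}$, $\Xi_j^{(i\to i')}=\bigcap_{j'=\lfloor\theta_j\rfloor}^{j-2}\{H_{j'}^{(i')}\ne i\}$. $\tau_{\text{com}}=\inf\{j\in\mathbb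 N:$ for all $j'\ge j$ and all ordered pairs $(i,i')$ with $\{i,i'\}\in E_{\text{hon}}$, $\Xi_{j'}^{(i\to i')}$ does not occur$\}$. *)

theory Defs
  imports "HOL-Probability.Probability"
begin

text \<open>Agents are natural numbers: honest agents are 1..n, malicious ones n+1..n+m.
  The graph is given by the neighbour map N.  Phases are j = 1, 2, ...\<close>

definition honest :: "nat \<Rightarrow> nat set" where
  "honest n = {1..n}"

definition dbar :: "nat \<Rightarrow> (nat \<Rightarrow> nat set) \<Rightarrow> nat" where
  "dbar n N = Max ((\<lambda>i. card (N i)) ` {1..n})"

definition Ehon :: "nat \<Rightarrow> (nat \<Rightarrow> nat set) \<Rightarrow> (nat \<times> nat) set" where
  "Ehon n N = {(i, i'). i \<in> {1..n} \<and> i' \<in> {1..n} \<and> i' \<in> N i}"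

definition valid_graph :: "nat \<Rightarrow> nat \<Rightarrow> (nat \<Rightarrow> nat set) \<Rightarrow> bool" where
  "valid_graph n m N \<longleftrightarrow>
     (\<forall>i\<in>{1..n+m}. N i \<subseteq> {1..n+m} \<and> i \<notin> N i) \<and>
     (\<forall>i\<in>{1..n+m}. \<forall>k\<in>{1..n+m}. k \<in> N i \<longleftrightarrow> i \<in> N k)"

definition hon_connected :: "nat \<Rightarrow> (nat \<Rightarrow> nat set) \<Rightarrow> bool" where
  "hon_connected n N \<longleftrightarrow> (\<forall>i\<in>{1..n}. \<forall>i'\<in>{1..n}. (i, i') \<in> (Ehon n N)\<^sup>*)"

definition theta :: "real \<Rightarrow> nat \<Rightarrow> real" where
  "theta \<rho>1 j = (real j / 3) powr \<rho>1"

definition J2star :: "real \<Rightarrow> real \<Rightarrow> nat" where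
  "J2star \<rho>1 \<eta> = (LEAST j::nat. j \<ge> 1 \<and> (\<forall>j'\<ge>j.
       1 \<le> \<lfloor>theta \<rho>1 j'\<rfloor> \<and> \<lfloor>theta \<rho>1 j'\<rfloor> \<le> int j' - 2 \<and>
       real j' / 3 \<le> real_of_int ((int j' - 2) - \<lceil>(real_of_int \<lfloor>theta \<rho>1 j'\<rfloor>) powr \<eta>\<rceil>)))"

text \<open>Blocklist P_j^(i): the trigger trig j0 i (blocking rule fires for agent i at phase j0)
  adds H_(j0-1)^(i) to the blocklists of phases j0, ..., ceil(j0^eta).\<close>
definition blocklist ::
  "real \<Rightarrow> (nat \<Rightarrow> nat \<Rightarrow> 'a \<Rightarrow> bool) \<Rightarrow> (nat \<Rightarrow> nat \<Rightarrow> 'a \<Rightarrow> nat) \<Rightarrow> nat \<Rightarrow> nat \<Rightarrow> 'a \<Rightarrow> nat set" where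
  "blocklist \<eta> trig H j i \<omega> =
     {H (j0 - 1) i \<omega> | j0. 2 \<le> j0 \<and> j0 \<le> j \<and> real j \<le> real_of_int \<lceil>real j0 powr \<eta>\<rceil> \<and> trig j0 i \<omega>}"

definition Xi :: "real \<Rightarrow> (nat \<Rightarrow> nat \<Rightarrow> 'a \<Rightarrow> nat) \<Rightarrow> nat \<Rightarrow> nat \<Rightarrow> nat \<Rightarrow> 'a \<Rightarrow> bool" where
  "Xi \<rho>1 H j i i' \<omega> \<longleftrightarrow> (\<forall>j'\<in>{nat \<lfloor>theta \<rho>1 j\<rfloor> .. j - 2}. H j' i' \<omega> \<noteq> i)"

text \<open>tau_com, valued in enat (infinity if the defining set is empty).\<close>
definition tau_com :: "nat \<Rightarrow> (nat \<Rightarrow> nat set) \<Rightarrow> real \<Rightarrow> (nat \<Rightarrow> nat \<Rightarrow> 'a \<Rightarrow> nat) \<Rightarrow> 'a \<Rightarrow> enat" where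
  "tau_com n N \<rho>1 H \<omega> = (INF j \<in> {j::nat. j \<ge> 1 \<and>
       (\<forall>j'\<ge>j. \<forall>(i, i') \<in> Ehon n N. \<not> Xi \<rho>1 H j' i i' \<omega>)}. enat j)"

end

theory Submission imports Defs begin

lemma J2_cond:
  assumes "\<eta> > 1" "0<\<rho>1" "\<rho>1 \<le> 1/\<eta>" "(9::nat) \<le> j'"
  shows "1 \<le> \<lfloor>theta \<rho>1 j'\<rfloor> \<and> \<lfloor>theta \<rho>1 j'\<rfloor> \<le> int j' - 2 \<and>
       real j' / 3 \<le> real_of_int ((int j' - 2) - \<lceil>(real_of_int \<lfloor>theta \<rho>1 j'\<rfloor>) powr \<eta>\<rceil>)"
proof -
  define x where "x = real j' / 3"
  have x3: "x \<ge> 3" using assms(4) unfolding x_def by simp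
  have r1: "\<rho>1 \<le> 1" using assms(1,3) by (smt (verit) divide_le_eq_1_pos)
  have th1: "1 \<le> theta \<rho>1 j'" unfolding theta_def x_def[symmetric]
    using ge_one_powr_ge_zero[of x \<rho>1] x3 assms(2) by simp
  have th2: "theta \<rho>1 j' \<le> x" unfolding theta_def x_def[symmetric]
    using powr_mono[of \<rho>1 1 x] r1 x3 by simp
  have f1: "1 \<le> \<lfloor>theta \<rho>1 j'\<rfloor>" using th1 by (simp add: le_floor_iff)
  have f2: "\<lfloor>theta \<rho>1 j'\<rfloor> \<le> int j' - 2"
  proof -
    have "real_of_int \<lfloor>theta \<rho>1 j'\<rfloor> \<le> x" using th2 by linarith
    moreover have "x \<le> real j' - 2" using x3 unfolding x_def by simp
    ultimately show ?thesis by linarith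
  qed
  define f where "f = real_of_int \<lfloor>theta \<rho>1 j'\<rfloor>"
  have f0: "0 \<le> f" "f \<le> theta \<rho>1 j'" using f1 unfolding f_def by auto
  have "f powr \<eta> \<le> (theta \<rho>1 j') powr \<eta>" using powr_mono2[of \<eta> f "theta \<rho>1 j'"] f0 assms(1) by simp
  also have "\<dots> = x powr (\<rho>1 * \<eta>)" unfolding theta_def x_def[symmetric] using x3 by (simp add: powr_powr)
  also have "\<dots> \<le> x powr 1" apply (rule powr_mono) using assms(1,3) x3 by (auto simp: field_simps)
  also have "\<dots> = x" using x3 by simp
  finally have fe: "f powr \<eta> \<le> x" .
  have "real_of_int \<lceil>f powr \<eta>\<rceil> < x + 1" using fe by linarith
  hence "real j' / 3 \<le> real_of_int ((int j' - 2) - \<lceil>f powr \<eta>\<rceil>)"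
    using x3 unfolding x_def by simp
  thus ?thesis using f1 f2 unfolding f_def by simp
qed

lemma J2_ok:
  assumes "\<eta> > 1" "0<\<rho>1" "\<rho>1 \<le> 1/\<eta>" "J2star \<rho>1 \<eta> \<le> j'"
  shows "1 \<le> J2star \<rho>1 \<eta>" "1 \<le> \<lfloor>theta \<rho>1 j'\<rfloor> \<and> \<lfloor>theta \<rho>1 j'\<rfloor> \<le> int j' - 2 \<and>
       real j' / 3 \<le> real_of_int ((int j' - 2) - \<lceil>(real_of_int \<lfloor>theta \<rho>1 j'\<rfloor>) powr \<eta>\<rceil>)"
proof -
  let ?P = "\<lambda>j::nat. j \<ge> 1 \<and> (\<forall>j'\<ge>j.
       1 \<le> \<lfloor>theta \<rho>1 j'\<rfloor> \<and> \<lfloor>theta \<rho>1 j'\<rfloor> \<le> int j' - 2 \<and>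
       real j' / 3 \<le> real_of_int ((int j' - 2) - \<lceil>(real_of_int \<lfloor>theta \<rho>1 j'\<rfloor>) powr \<eta>\<rceil>))"
  have "?P 9" using J2_cond[OF assms(1-3)] by auto
  hence "?P (J2star \<rho>1 \<eta>)" unfolding J2star_def by (rule LeastI)
  thus "1 \<le> J2star \<rho>1 \<eta>" "1 \<le> \<lfloor>theta \<rho>1 j'\<rfloor> \<and> \<lfloor>theta \<rho>1 j'\<rfloor> \<le> int j' - 2 \<and>
       real j' / 3 \<le> real_of_int ((int j' - 2) - \<lceil>(real_of_int \<lfloor>theta \<rho>1 j'\<rfloor>) powr \<eta>\<rceil>)"
    using assms(4) by auto
qed


locale stp =
  fixes M :: "'a measure" and F :: "nat \<Rightarrow> 'a measure"
    and n m :: nat and N :: "nat \<Rightarrow> nat set"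
    and H :: "nat \<Rightarrow> nat \<Rightarrow> 'a \<Rightarrow> nat" and trig :: "nat \<Rightarrow> nat \<Rightarrow> 'a \<Rightarrow> bool"
    and \<eta> :: real
  assumes PS: "prob_space M"
    and n1: "n \<ge> 1"
    and VG: "valid_graph n m N"
    and eta: "\<eta> > 1"
    and SUB: "\<And>j. subalgebra M (F j)"
    and MONO: "\<And>j. sets (F j) \<subseteq> sets (F (Suc j))"
    and HM: "\<And>j i. H j i \<in> measurable (F (Suc j)) (count_space UNIV)"
    and TM: "\<And>j i. {\<omega> \<in> space M. trig j i \<omega>} \<in> sets (F j)"
    and UNI: "\<And>j i k A. j \<ge> 1 \<Longrightarrow> i \<in> {1..n} \<Longrightarrow> A \<in> sets (F j) \<Longrightarrow>
           measure M (A \<inter> {\<omega> \<in> space M. N i - blocklist \<eta> trig H j i \<omega> \<noteq> {} \<and> H j i \<omega> = k})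
           = (\<integral>\<omega>. indicator A \<omega> *
                 (if k \<in> N i - blocklist \<eta> trig H j i \<omega>
                  then 1 / real (card (N i - blocklist \<eta> trig H j i \<omega>)) else 0) \<partial>M)"
begin

interpretation P: prob_space M by (rule PS)

lemma spF: "space (F j) = space M" using SUB[of j] unfolding subalgebra_def by auto
lemma setsF: "sets (F j) \<subseteq> sets M" using SUB[of j] unfolding subalgebra_def by auto

lemma setsF_mono: "j \<le> t \<Longrightarrow> sets (F j) \<subseteq> sets (F t)"
  using lift_Suc_mono_le[of "\<lambda>j. sets (F j)", OF MONO] by blast

lemma HM_F: "j < t \<Longrightarrow> H j i \<in> measurable (F t) (count_space UNIV)"
proof -
  assume "j < t"
  hence "subalgebra (F t) (F (Suc j))" using setsF_mono[of "Suc j" t] spF[of t] spF[of "Suc j"]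
    unfolding subalgebra_def by simp
  thus ?thesis by (rule measurable_from_subalg[OF _ HM])
qed

lemma HM_M: "H j i \<in> measurable M (count_space UNIV)"
  by (rule measurable_from_subalg[OF SUB HM])

lemma H_set_F: "j < t \<Longrightarrow> {\<omega>\<in>space M. H j i \<omega> = k} \<in> sets (F t)"
proof -
  assume "j < t"
  hence "H j i -` {k} \<inter> space (F t) \<in> sets (F t)" by (rule measurable_sets[OF HM_F]) simp
  moreover have "H j i -` {k} \<inter> space (F t) = {\<omega>\<in>space M. H j i \<omega> = k}" unfolding spF by blast
  ultimately show ?thesis by simp
qed

lemma H_set_M: "{\<omega>\<in>space M. H j i \<omega> = k} \<in> sets M"
  using H_set_F[of j "Suc j" i k] setsF[of "Suc j"] by (rule subsetD[rotated]) simp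

lemma finN: "i \<in> {1..n+m} \<Longrightarrow> finite (N i)"
  using VG unfolding valid_graph_def by (meson finite_atLeastAtMost finite_subset)

lemma mem_block: "x \<in> blocklist \<eta> trig H t i \<omega> \<longleftrightarrow>
   (\<exists>j0\<in>{j0. 2 \<le> j0 \<and> j0 \<le> t \<and> real t \<le> real_of_int \<lceil>real j0 powr \<eta>\<rceil>}. trig j0 i \<omega> \<and> H (j0-1) i \<omega> = x)"
  unfolding blocklist_def by auto

lemma set_block: "{\<omega>\<in>space M. x \<in> blocklist \<eta> trig H t i \<omega>} \<in> sets M"
  unfolding mem_block
proof (rule sets.sets_Collect_finite_Ex)
  show "finite {j0. 2 \<le> j0 \<and> j0 \<le> t \<and> real t \<le> real_of_int \<lceil>real j0 powr \<eta>\<rceil>}"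
    by (rule finite_subset[of _ "{..t}"]) auto
  fix j0
  have "{\<omega>\<in>space M. trig j0 i \<omega> \<and> H (j0-1) i \<omega> = x} =
        {\<omega>\<in>space M. trig j0 i \<omega>} \<inter> {\<omega>\<in>space M. H (j0-1) i \<omega> = x}" by auto
  also have "\<dots> \<in> sets M"
  proof (rule sets.Int)
    show "{\<omega>\<in>space M. trig j0 i \<omega>} \<in> sets M" using TM[of j0 i] setsF[of j0] by (rule subsetD[rotated])
  qed (rule H_set_M)
  finally show "{\<omega>\<in>space M. trig j0 i \<omega> \<and> H (j0 - 1) i \<omega> = x} \<in> sets M" .
qed

lemma g_meas:
  assumes "i \<in> {1..n+m}"
  shows "(\<lambda>\<omega>. if k \<in> N i - blocklist \<eta> trig H t i \<omega>
                  then 1 / real (card (N i - blocklist \<eta> trig H t i \<omega>)) else 0) \<in> borel_measurable M"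
proof -
  define Bf where "Bf \<omega> = blocklist \<eta> trig H t i \<omega> \<inter> N i" for \<omega>
  have fin: "finite (N i)" using finN assms by blast
  have "Bf \<in> M \<rightarrow>\<^sub>M count_space (Pow (N i))"
    unfolding measurable_count_space_eq_countable[OF countable_finite[OF finite_Pow_iff[THEN iffD2, OF fin]]]
  proof (intro conjI ballI)
    show "Bf \<in> space M \<rightarrow> Pow (N i)" unfolding Bf_def by auto
    fix S assume S: "S \<in> Pow (N i)"
    have "Bf -` {S} \<inter> space M = {\<omega>\<in>space M. \<forall>x\<in>N i. (x \<in> blocklist \<eta> trig H t i \<omega>) = (x \<in> S)}"
      using S unfolding Bf_def by auto
    also have "\<dots> \<in> sets M"
    proof (rule sets.sets_Collect_finite_All[OF _ fin])
      fix x
      have A: "{\<omega>\<in>space M. x \<in> blocklist \<eta> trig H t i \<omega>} \<in> sets M"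
        by (rule set_block)
      show "{\<omega>\<in>space M. (x \<in> blocklist \<eta> trig H t i \<omega>) = (x \<in> S)} \<in> sets M"
      proof (cases "x \<in> S")
        case True thus ?thesis using A by simp
      next
        case False
        have "{\<omega>\<in>space M. (x \<in> blocklist \<eta> trig H t i \<omega>) = (x \<in> S)} = space M - {\<omega>\<in>space M. x \<in> blocklist \<eta> trig H t i \<omega>}"
          using False by auto
        thus ?thesis using A by auto
      qed
    qed
    finally show "Bf -` {S} \<inter> space M \<in> sets M" .
  qed
  moreover have "(\<lambda>S. if k \<in> N i - S then 1 / real (card (N i - S)) else 0) \<in> count_space (Pow (N i)) \<rightarrow>\<^sub>M borel"
    by simp
  ultimately have "(\<lambda>\<omega>. (\<lambda>S. if k \<in> N i - S then 1 / real (card (N i - S)) else 0) (Bf \<omega>)) \<in> borel_measurable M"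
    by (rule measurable_compose)
  hence X: "(\<lambda>\<omega>. (\<lambda>S. if k \<in> N i - S then 1 / real (card (N i - S)) else 0) (blocklist \<eta> trig H t i \<omega> \<inter> N i)) \<in> borel_measurable M"
    unfolding Bf_def .
  have eqs: "\<And>\<omega>. N i - (blocklist \<eta> trig H t i \<omega> \<inter> N i) = N i - blocklist \<eta> trig H t i \<omega>" by blast
  show ?thesis using X unfolding eqs .
qed


definition "G i i' a t = {\<omega>\<in>space M. \<forall>j''\<in>{a..t}. H j'' i' \<omega> \<noteq> i}"

lemma G_F: "G i i' a t \<in> sets (F (Suc t))"
proof -
  have "{\<omega>\<in>space (F (Suc t)). \<forall>j''\<in>{a..t}. H j'' i' \<omega> \<noteq> i} \<in> sets (F (Suc t))"
  proof (rule sets.sets_Collect_finite_All)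
    fix j'' assume "j'' \<in> {a..t}"
    hence "{\<omega>\<in>space M. H j'' i' \<omega> = i} \<in> sets (F (Suc t))" using H_set_F by simp
    hence "space (F (Suc t)) - {\<omega>\<in>space M. H j'' i' \<omega> = i} \<in> sets (F (Suc t))" by blast
    moreover have "space (F (Suc t)) - {\<omega>\<in>space M. H j'' i' \<omega> = i} = {\<omega>\<in>space (F (Suc t)). H j'' i' \<omega> \<noteq> i}"
      using spF by auto
    ultimately show "{\<omega>\<in>space (F (Suc t)). H j'' i' \<omega> \<noteq> i} \<in> sets (F (Suc t))" by simp
  qed simp
  thus ?thesis unfolding G_def spF .
qed

lemma G_M: "G i i' a t \<in> sets M" using G_F setsF by blast

lemma edge: "(i,i') \<in> Ehon n N \<Longrightarrow> i \<in> {1..n} \<and> i' \<in> {1..n} \<and> i \<in> N i' \<and> finite (N i')"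
proof -
  assume "(i,i') \<in> Ehon n N"
  hence h: "i \<in> {1..n}" "i' \<in> {1..n}" "i' \<in> N i" unfolding Ehon_def by auto
  hence "i \<in> N i'" using VG unfolding valid_graph_def by auto
  thus ?thesis using h finN[of i'] by auto
qed

lemma card_le_dbar: "i' \<in> {1..n} \<Longrightarrow> card (N i') \<le> dbar n N"
  unfolding dbar_def by (rule Max_ge) auto

lemma dbar_pos: "(i,i') \<in> Ehon n N \<Longrightarrow> 1 \<le> dbar n N"
proof -
  assume e: "(i,i') \<in> Ehon n N"
  have "card (N i') \<ge> 1" using edge[OF e] by (metis One_nat_def Suc_leI card_gt_0_iff empty_iff)
  thus ?thesis using card_le_dbar edge[OF e] by (meson le_trans)
qed

lemma step:
  assumes e: "(i,i') \<in> Ehon n N" and a1: "a \<ge> 1"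
    and ac: "real_of_int \<lceil>real a powr \<eta>\<rceil> \<le> real c" and ct: "c < t"
  shows "measure M (G i i' a t) \<le> (1 - 1/real (dbar n N)) * measure M (G i i' a (t-1))"
proof -
  define d where "d = real (dbar n N)"
  define A where "A = G i i' a (t-1)"
  have E: "i \<in> {1..n}" "i' \<in> {1..n}" "i \<in> N i'" "finite (N i')" using edge[OF e] by auto
  have d1: "d \<ge> 1" using dbar_pos[OF e] unfolding d_def by simp
  have t1: "Suc (t-1) = t" "t \<ge> 1" using ct by auto
  have AF: "A \<in> sets (F t)" unfolding A_def using G_F[of i i' a "t-1"] t1 by simp
  have AM: "A \<in> sets M" using AF setsF by blast
  have "real a \<le> real a powr \<eta>" using powr_mono[of 1 \<eta> "real a"] a1 eta by simp
  hence ac': "a < t" using ac ct by linarith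
  have notb: "i \<notin> blocklist \<eta> trig H t i' \<omega>" if w: "\<omega> \<in> A" for \<omega>
  proof
    assume "i \<in> blocklist \<eta> trig H t i' \<omega>"
    then obtain j0 where j0: "2 \<le> j0" "j0 \<le> t" "real t \<le> real_of_int \<lceil>real j0 powr \<eta>\<rceil>" "H (j0-1) i' \<omega> = i"
      unfolding mem_block by auto
    show False
    proof (cases "j0 \<le> a")
      case True
      hence "real j0 powr \<eta> \<le> real a powr \<eta>" using eta by (intro powr_mono2) auto
      hence "real_of_int \<lceil>real j0 powr \<eta>\<rceil> \<le> real_of_int \<lceil>real a powr \<eta>\<rceil>" by (simp add: ceiling_mono)
      thus False using j0(3) ac ct by linarith
    next
      case False
      hence "j0 - 1 \<in> {a..t-1}" using j0 by auto
      thus False using w j0(4) unfolding A_def G_def by auto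
    qed
  qed
  define g where "g \<omega> = (if i \<in> N i' - blocklist \<eta> trig H t i' \<omega>
                  then 1 / real (card (N i' - blocklist \<eta> trig H t i' \<omega>)) else 0)" for \<omega>
  have gm: "g \<in> borel_measurable M" unfolding g_def using g_meas[of i' i t] E by auto
  have g01: "0 \<le> g \<omega> \<and> g \<omega> \<le> 1" for \<omega>
  proof (cases "i \<in> N i' - blocklist \<eta> trig H t i' \<omega>")
    case True
    hence "card (N i' - blocklist \<eta> trig H t i' \<omega>) > 0" using E(4) card_gt_0_iff by blast
    thus ?thesis unfolding g_def using True by simp
  next
    case False thus ?thesis unfolding g_def by (simp only: if_False) simp
  qed
  have gA: "1/d \<le> g \<omega>" if w: "\<omega> \<in> A" for \<omega>
  proof -
    have iin: "i \<in> N i' - blocklist \<eta> trig H t i' \<omega>" using notb[OF w] E by auto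
    have fin: "finite (N i' - blocklist \<eta> trig H t i' \<omega>)" using E by auto
    have c0: "card (N i' - blocklist \<eta> trig H t i' \<omega>) > 0" using iin fin card_gt_0_iff by blast
    have "card (N i' - blocklist \<eta> trig H t i' \<omega>) \<le> card (N i')" using E by (intro card_mono) auto
    also have "\<dots> \<le> dbar n N" using card_le_dbar E by auto
    finally have "real (card (N i' - blocklist \<eta> trig H t i' \<omega>)) \<le> d" unfolding d_def by simp
    hence "1/d \<le> 1 / real (card (N i' - blocklist \<eta> trig H t i' \<omega>))"
      using c0 by (intro divide_left_mono) auto
    thus ?thesis unfolding g_def using iin by simp
  qed
  have seteq: "A \<inter> {\<omega> \<in> space M. N i' - blocklist \<eta> trig H t i' \<omega> \<noteq> {} \<and> H t i' \<omega> = i}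
       = A \<inter> {\<omega> \<in> space M. H t i' \<omega> = i}" using notb E by auto
  have meq: "measure M (A \<inter> {\<omega> \<in> space M. H t i' \<omega> = i}) = (\<integral>\<omega>. indicator A \<omega> * g \<omega> \<partial>M)"
    using UNI[OF t1(2) E(2) AF, of i] unfolding seteq g_def by simp
  have int1: "integrable M (\<lambda>\<omega>. indicator A \<omega> * g \<omega>)"
  proof (rule P.integrable_const_bound[where B=1])
    show "AE x in M. norm (indicator A x * g x) \<le> 1" using g01 by (auto simp: indicator_def)
    show "(\<lambda>\<omega>. indicator A \<omega> * g \<omega>) \<in> borel_measurable M" using gm AM by measurable
  qed
  have int2: "integrable M (\<lambda>\<omega>. indicator A \<omega> * (1/d))"
  proof -
    have "emeasure M A < \<top>" by (simp add: P.emeasure_eq_measure)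
    thus ?thesis using AM by (intro integrable_mult_left integrable_real_indicator) (simp_all add: P.emeasure_eq_measure)
  qed
  have "measure M A / d = (\<integral>\<omega>. indicator A \<omega> * (1/d) \<partial>M)" using AM by simp
  also have "\<dots> \<le> (\<integral>\<omega>. indicator A \<omega> * g \<omega> \<partial>M)"
    using int1 int2 gA by (intro integral_mono) (auto simp: indicator_def)
  finally have low: "measure M A / d \<le> measure M (A \<inter> {\<omega> \<in> space M. H t i' \<omega> = i})" using meq by simp
  have Geq: "G i i' a t = A - {\<omega> \<in> space M. H t i' \<omega> = i}"
  proof -
    have "{a..t} = insert t {a..t-1}" using ac' by auto
    thus ?thesis unfolding A_def G_def by auto
  qed
  have "measure M (G i i' a t) = measure M A - measure M (A \<inter> {\<omega> \<in> space M. H t i' \<omega> = i})"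
    unfolding Geq using AM H_set_M by (intro P.finite_measure_Diff') auto
  also have "\<dots> \<le> measure M A - measure M A / d" using low by simp
  also have "\<dots> = (1 - 1/d) * measure M A" by (simp add: field_simps)
  finally show ?thesis unfolding d_def A_def .
qed

lemma iter:
  assumes e: "(i,i') \<in> Ehon n N" and a1: "a \<ge> 1"
    and ac: "real_of_int \<lceil>real a powr \<eta>\<rceil> \<le> real c"
  shows "measure M (G i i' a (c+k)) \<le> (1 - 1/real (dbar n N)) ^ k"
proof (induction k)
  case 0 show ?case by (simp add: P.prob_le_1)
next
  case (Suc k)
  have d1: "real (dbar n N) \<ge> 1" using dbar_pos[OF e] by simp
  hence q0: "0 \<le> 1 - 1/real (dbar n N)" by simp
  have "measure M (G i i' a (c + Suc k)) \<le> (1 - 1/real (dbar n N)) * measure M (G i i' a (c + Suc k - 1))"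
    by (rule step[OF e a1 ac]) simp
  also have "\<dots> \<le> (1 - 1/real (dbar n N)) * (1 - 1/real (dbar n N)) ^ k"
    using Suc q0 by (intro mult_left_mono) auto
  finally show ?case by simp
qed


lemma xi_bound:
  assumes e: "(i,i') \<in> Ehon n N" and h1: "1 \<le> \<lfloor>theta \<rho>1 j'\<rfloor>"
    and h3: "real j' / 3 \<le> real_of_int ((int j' - 2) - \<lceil>(real_of_int \<lfloor>theta \<rho>1 j'\<rfloor>) powr \<eta>\<rceil>)"
  shows "measure M {\<omega>\<in>space M. Xi \<rho>1 H j' i i' \<omega>} \<le> exp (- real j' / (3 * real (dbar n N)))"
proof -
  define d where "d = real (dbar n N)"
  have d1: "d \<ge> 1" using dbar_pos[OF e] unfolding d_def by simp
  define a where "a = nat \<lfloor>theta \<rho>1 j'\<rfloor>"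
  have ra: "real a = real_of_int \<lfloor>theta \<rho>1 j'\<rfloor>" using h1 unfolding a_def by simp
  have a1: "a \<ge> 1" using nat_mono[OF h1] unfolding a_def by simp
  define ci where "ci = \<lceil>real a powr \<eta>\<rceil>"
  have ci0: "ci \<ge> 0" unfolding ci_def by (metis ceiling_zero ceiling_mono powr_ge_zero)
  define c where "c = nat ci"
  have rc': "real c = real_of_int ci" unfolding c_def using ci0 by simp
  have rc: "real_of_int \<lceil>real a powr \<eta>\<rceil> \<le> real c" unfolding rc' ci_def by simp
  have cc: "\<lceil>real_of_int \<lfloor>theta \<rho>1 j'\<rfloor> powr \<eta>\<rceil> = ci" unfolding ci_def ra by simp
  have h3': "real j' / 3 \<le> real j' - 2 - real c"
    using h3 unfolding cc rc' by simp
  define L where "L = j' - 2 - c"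
  have cL: "c + L = j' - 2" and rL: "real L \<ge> real j' / 3"
    using h3' unfolding L_def by (auto simp: of_nat_diff)
  have seteq: "{\<omega>\<in>space M. Xi \<rho>1 H j' i i' \<omega>} = G i i' a (c+L)"
    unfolding Xi_def G_def a_def cL by simp
  have "measure M {\<omega>\<in>space M. Xi \<rho>1 H j' i i' \<omega>} \<le> (1 - 1/d) ^ L"
    unfolding seteq d_def by (rule iter[OF e a1 rc])
  also have "\<dots> \<le> exp (-1/d) ^ L"
  proof (rule power_mono)
    show "1 - 1/d \<le> exp (-1/d)" using exp_ge_add_one_self[of "-1/d"] by simp
    show "0 \<le> 1 - 1/d" using d1 by simp
  qed
  also have "\<dots> = exp (real L * (-1/d))" by (rule exp_of_nat_mult[symmetric])
  also have "\<dots> \<le> exp (- real j' / (3 * d))"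
  proof -
    have "real j' / 3 / d \<le> real L / d" using rL d1 by (intro divide_right_mono) auto
    moreover have "real j' / 3 / d = real j' / (3 * d)" by simp
    moreover have "real L * (-1/d) = - (real L / d)" by simp
    moreover have "- real j' / (3 * d) = - (real j' / (3 * d))" by simp
    ultimately have "real L * (-1/d) \<le> - real j' / (3 * d)" by linarith
    thus ?thesis by simp
  qed
  finally show ?thesis unfolding d_def .
qed


lemma xi_sets: "{\<omega>\<in>space M. Xi \<rho>1 H j' i i' \<omega>} \<in> sets M"
proof -
  have "{\<omega>\<in>space M. Xi \<rho>1 H j' i i' \<omega>} = G i i' (nat \<lfloor>theta \<rho>1 j'\<rfloor>) (j'-2)"
    unfolding Xi_def G_def by simp
  thus ?thesis using G_M by simp
qed

lemma finite_Ehon: "finite (Ehon n N)"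
  by (rule finite_subset[of _ "{1..n} \<times> {1..n}"]) (auto simp: Ehon_def)

lemma card_Ehon: "card (Ehon n N) \<le> n * n"
proof -
  have "card (Ehon n N) \<le> card ({1..n} \<times> {1..n})"
    by (rule card_mono) (auto simp: Ehon_def)
  thus ?thesis by simp
qed

lemma dbar_le: "dbar n N \<le> n + m - 1"
  unfolding dbar_def
proof (rule Max.boundedI)
  show "finite ((\<lambda>i. card (N i)) ` {1..n})" by simp
  show "(\<lambda>i. card (N i)) ` {1..n} \<noteq> {}" using n1 by auto
  fix x assume "x \<in> (\<lambda>i. card (N i)) ` {1..n}"
  then obtain i where i: "i \<in> {1..n}" "x = card (N i)" by auto
  have "N i \<subseteq> {1..n+m} - {i}" using VG i unfolding valid_graph_def by auto
  hence "card (N i) \<le> card ({1..n+m} - {i})" by (intro card_mono) auto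
  also have "\<dots> = n + m - 1" using i by simp
  finally show "x \<le> n + m - 1" using i by simp
qed

lemma final:
  assumes r0: "0 < \<rho>1" and r1: "\<rho>1 \<le> 1/\<eta>" and jJ: "J2star \<rho>1 \<eta> \<le> j"
  shows "measure M {\<omega> \<in> space M. tau_com n N \<rho>1 H \<omega> > enat j}
           \<le> 3 * (real n + real m) ^ 3 * exp (- real j / (3 * real (dbar n N)))"
proof (cases "dbar n N = 0")
  case True
  have "measure M {\<omega> \<in> space M. tau_com n N \<rho>1 H \<omega> > enat j} \<le> 1" by (rule P.prob_le_1)
  also have "1 \<le> 3 * (real n + real m) ^ 3"
  proof -
    have "1 \<le> real n + real m" using n1 by simp
    hence "1 \<le> (real n + real m) ^ 3" by (simp add: one_le_power)
    thus ?thesis by simp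
  qed
  finally show ?thesis using True by simp
next
  case False
  define d where "d = real (dbar n N)"
  have d1: "d \<ge> 1" using False unfolding d_def by simp
  define s where "s = real n + real m"
  have ds: "d \<le> s - 1" using dbar_le n1 unfolding d_def s_def by (simp add: of_nat_diff)
  define C where "C = real (card (Ehon n N))"
  have C: "C \<le> s * s"
  proof -
    have "C \<le> real n * real n" using card_Ehon unfolding C_def by (metis of_nat_le_iff of_nat_mult)
    also have "\<dots> \<le> s * s" unfolding s_def by (intro mult_mono) auto
    finally show ?thesis .
  qed
  define x where "x = 1 / (3 * d)"
  have x0: "x > 0" using d1 unfolding x_def by simp
  define q where "q = exp (- x)"
  have q0: "0 \<le> q" "q < 1" unfolding q_def using x0 by auto
  define e where "e = exp (- real j / (3 * d))"
  have e0: "e \<ge> 0" unfolding e_def by simp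
  define E where "E k = (\<Union>p\<in>Ehon n N. {\<omega>\<in>space M. Xi \<rho>1 H (j+k) (fst p) (snd p) \<omega>})" for k
  have EM: "E k \<in> sets M" for k
    unfolding E_def using finite_Ehon xi_sets by (intro sets.finite_UN) auto
  have Eb: "measure M (E k) \<le> C * e * q ^ k" for k
  proof -
    have "measure M (E k) \<le> (\<Sum>p\<in>Ehon n N. measure M {\<omega>\<in>space M. Xi \<rho>1 H (j+k) (fst p) (snd p) \<omega>})"
      unfolding E_def using finite_Ehon xi_sets by (intro P.finite_measure_subadditive_finite) auto
    also have "\<dots> \<le> C * exp (- real (j+k) / (3 * d))"
      unfolding C_def
    proof (rule sum_bounded_above)
      fix p assume p: "p \<in> Ehon n N"
      have jk: "J2star \<rho>1 \<eta> \<le> j + k" using jJ by simp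
      have J: "1 \<le> \<lfloor>theta \<rho>1 (j+k)\<rfloor> \<and> \<lfloor>theta \<rho>1 (j+k)\<rfloor> \<le> int (j+k) - 2 \<and>
       real (j+k) / 3 \<le> real_of_int ((int (j+k) - 2) - \<lceil>(real_of_int \<lfloor>theta \<rho>1 (j+k)\<rfloor>) powr \<eta>\<rceil>)"
        using J2_ok(2)[OF eta r0 r1 jk] .
      have p': "(fst p, snd p) \<in> Ehon n N" using p by simp
      show "measure M {\<omega>\<in>space M. Xi \<rho>1 H (j+k) (fst p) (snd p) \<omega>} \<le> exp (- real (j+k) / (3 * d))"
        using xi_bound[OF p'] J unfolding d_def by blast
    qed
    also have "exp (- real (j+k) / (3 * d)) = e * q ^ k"
    proof -
      have "- real (j+k) / (3 * d) = - real j / (3 * d) + real k * (- x)"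
        unfolding x_def using d1 by (simp add: field_simps add_divide_distrib[symmetric])
      thus ?thesis unfolding e_def q_def by (simp only: exp_add exp_of_nat_mult)
    qed
    finally show ?thesis by (simp add: mult.assoc)
  qed
  have sg: "summable (\<lambda>k. C * e * q ^ k)" using q0 by (intro summable_mult summable_geometric) simp
  have sE: "summable (\<lambda>k. measure M (E k))"
    by (rule summable_comparison_test'[OF sg, of 0]) (use Eb in simp)
  have sub: "{\<omega> \<in> space M. tau_com n N \<rho>1 H \<omega> > enat j} \<subseteq> (\<Union>k. E k)"
  proof
    fix \<omega> assume w: "\<omega> \<in> {\<omega> \<in> space M. tau_com n N \<rho>1 H \<omega> > enat j}"
    have j1: "j \<ge> 1" using J2_ok(1)[OF eta r0 r1 jJ] jJ by simp
    show "\<omega> \<in> (\<Union>k. E k)"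
    proof (rule ccontr)
      assume "\<omega> \<notin> (\<Union>k. E k)"
      hence no: "\<forall>j'\<ge>j. \<forall>(i, i') \<in> Ehon n N. \<not> Xi \<rho>1 H j' i i' \<omega>"
      proof (intro allI impI ballI)
        fix j' p assume "\<omega> \<notin> (\<Union>k. E k)" "j \<le> j'" "p \<in> Ehon n N"
        hence "\<omega> \<notin> E (j' - j)" by blast
        hence "\<not> Xi \<rho>1 H j' (fst p) (snd p) \<omega>" using \<open>j \<le> j'\<close> \<open>p \<in> Ehon n N\<close> w unfolding E_def by auto
        thus "case p of (i, i') \<Rightarrow> \<not> Xi \<rho>1 H j' i i' \<omega>" by (cases p) simp
      qed
      have "tau_com n N \<rho>1 H \<omega> \<le> enat j"
        unfolding tau_com_def by (rule INF_lower2[of j]) (use j1 no in auto)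
      thus False using w by (simp add: not_le[symmetric])
    qed
  qed
  have "measure M {\<omega> \<in> space M. tau_com n N \<rho>1 H \<omega> > enat j} \<le> C * e * (1 / (1 - q))"
  proof (cases "{\<omega> \<in> space M. tau_com n N \<rho>1 H \<omega> > enat j} \<in> sets M")
    case True
    have "measure M {\<omega> \<in> space M. tau_com n N \<rho>1 H \<omega> > enat j} \<le> measure M (\<Union>k. E k)"
      using sub True EM by (intro P.finite_measure_mono) auto
    also have "\<dots> \<le> (\<Sum>k. measure M (E k))"
      using EM sE by (intro P.finite_measure_subadditive_countably) auto
    also have "\<dots> \<le> (\<Sum>k. C * e * q ^ k)" using Eb sE sg by (intro suminf_le) auto
    also have "\<dots> = C * e * (1 / (1 - q))"
      using q0 by (simp add: suminf_mult suminf_geometric)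
    finally show ?thesis .
  next
    case False
    hence "measure M {\<omega> \<in> space M. tau_com n N \<rho>1 H \<omega> > enat j} = 0" by (rule measure_notin_sets)
    moreover have "0 \<le> C * e * (1 / (1 - q))" using q0 e0 unfolding C_def by simp
    ultimately show ?thesis by simp
  qed
  also have "C * e * (1 / (1 - q)) \<le> 3 * s ^ 3 * e"
  proof -
    have ex: "exp x \<ge> 1 + x" by (rule exp_ge_add_one_self)
    have xe: "x \<le> exp x - 1" "0 < x" using ex x0 by linarith+
    have "1 / (1 - q) = 1 + 1 / (exp x - 1)"
      using x0 ex unfolding q_def by (simp add: exp_minus field_simps)
    also have "\<dots> \<le> 1 + 1 / x" using x0 xe by (intro add_left_mono divide_left_mono) auto
    also have "\<dots> = 1 + 3 * d" unfolding x_def by simp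
    also have "\<dots> \<le> 3 * s - 2" using ds by simp
    finally have qb: "1 / (1 - q) \<le> 3 * s - 2" .
    have s1: "s \<ge> 1" using n1 unfolding s_def by simp
    have C0: "0 \<le> C" unfolding C_def by simp
    have "C * (1 / (1 - q)) \<le> (s * s) * (3 * s - 2)"
      using C qb C0 q0 by (intro mult_mono) auto
    also have "\<dots> \<le> 3 * s ^ 3" using s1 by (simp add: power3_eq_cube field_simps)
    finally have "C * (1 / (1 - q)) \<le> 3 * s ^ 3" .
    thus ?thesis using e0 by (metis mult.commute mult.left_commute mult_right_mono)
  qed
  finally show ?thesis unfolding s_def e_def d_def .
qed

end

theorem mainTheorem8:
  fixes M :: "'a measure" and F :: "nat \<Rightarrow> 'a measure"
    and n m :: nat and N :: "nat \<Rightarrow> nat set"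
    and H :: "nat \<Rightarrow> nat \<Rightarrow> 'a \<Rightarrow> nat" and trig :: "nat \<Rightarrow> nat \<Rightarrow> 'a \<Rightarrow> bool"
    and \<alpha> \<beta> \<eta> \<rho>1 \<rho>2 :: real and j :: nat
  assumes "prob_space M"
    and "n \<ge> 1"
    and "valid_graph n m N"
    and "hon_connected n N"
    and "\<eta> > 1" and "0 < \<rho>1" and "\<rho>1 \<le> 1 / \<eta>" and "\<beta> > 1"
    and "\<alpha> > 3/2 + 1 / (2 * \<beta>) + 1 / (2 * \<rho>1\<^sup>2)"
    and "1 / (2 * \<alpha> - 3) < \<rho>2" and "\<rho>2 < \<rho>1 * (\<beta> - 1)"
    \<comment> \<open>filtration: F j is the information available at phase j before the samples H_j are drawn\<close>
    and "\<And>j. subalgebra M (F j)"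
    and "\<And>j. sets (F j) \<subseteq> sets (F (Suc j))"
    and "\<And>j i. H j i \<in> measurable (F (Suc j)) (count_space UNIV)"
    and "\<And>j i. {\<omega> \<in> space M. trig j i \<omega>} \<in> sets (F j)"
    \<comment> \<open>given the past, H_j^(i) is uniform on N(i) minus the blocklist\<close>
    and "\<And>j i k A. j \<ge> 1 \<Longrightarrow> i \<in> {1..n} \<Longrightarrow> A \<in> sets (F j) \<Longrightarrow>
           measure M (A \<inter> {\<omega> \<in> space M. N i - blocklist \<eta> trig H j i \<omega> \<noteq> {} \<and> H j i \<omega> = k})
           = (\<integral>\<omega>. indicator A \<omega> *
                 (if k \<in> N i - blocklist \<eta> trig H j i \<omega>
                  then 1 / real (card (N i - blocklist \<eta> trig H j i \<omega>)) else 0) \<partial>M)"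
    and "j \<ge> J2star \<rho>1 \<eta>"
  shows "measure M {\<omega> \<in> space M. tau_com n N \<rho>1 H \<omega> > enat j}
           \<le> 3 * (real n + real m) ^ 3 * exp (- real j / (3 * real (dbar n N)))"
proof -
  interpret S: stp M F n m N H trig \<eta>
    by (rule stp.intro) (fact assms)+
  show ?thesis by (rule S.final) (fact assms)+
qed

end
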